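(* Let $0<\rho\le1/3$ and $q\ge2$. Let $X$ be a real random variable with $\mathbb{E}[X]=0$ and $\mathbb{E}[X^2]=1$, and let $Z$ be a standard normal random variable. Then for every $d\in\mathbb{R}$, \[\|1+\rho dX\|_q^q\le\|1+dZ\|_q^q+\beta^q\|dX\|_q^q,\qquad\text{where }\beta=\rho\left(1+\frac{2(q-2)}{\log(1/\rho)}\right).\]
   Context: $\|Y\|_q=(\mathbb{E}|Y|^q)^{1/q}$; $\log$ is the natural logarithm. *)

theory Defs
  imports "HOL-Probability.Probability"
begin

definition qmoment :: "'a measure \<Rightarrow> real \<Rightarrow> ('a \<Rightarrow> real) \<Rightarrow> ennreal" where
  "qmoment M q Y = (\<integral>\<^sup>+ x. ennreal (\<bar>Y x\<bar> powr q) \<partial>M)"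

end

theory Submission
  imports Defs
begin

lemma d1: "t > -1 \<Longrightarrow> ((\<lambda>t. (1+t) powr q - q*t - a*t^2) has_real_derivative
   (q*(1+t) powr (q-1) - q - 2*a*t)) (at t)"
  by (auto intro!: derivative_eq_intros simp: power2_eq_square)

lemma d2: "t > -1 \<Longrightarrow> ((\<lambda>t. q*(1+t) powr (q-1) - q - 2*a*t) has_real_derivative
   (q*(q-1)*(1+t) powr (q-2) - 2*a)) (at t)"
  by (auto intro!: derivative_eq_intros simp: power2_eq_square)

lemma taylor_up:
  fixes q a y Y :: real
  assumes q: "q \<ge> 2" and y: "-1/2 \<le> y" "y \<le> Y" "0 \<le> Y" and a: "q*(q-1)*(1+Y) powr (q-2) \<le> 2*a"
  shows "(1+y) powr q \<le> 1 + q*y + a*y^2"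
proof -
  define f where "f = (\<lambda>t::real. (1+t) powr q - q*t - a*t^2)"
  define g where "g = (\<lambda>t::real. q*(1+t) powr (q-1) - q - 2*a*t)"
  have g0: "g 0 = 0" by (simp add: g_def)
  have gd: "\<exists>z. DERIV g t :> z \<and> z \<le> 0" if "-1/2 \<le> t" "t \<le> Y" for t
  proof -
    have "(1+t) powr (q-2) \<le> (1+Y) powr (q-2)"
      using that q by (intro powr_mono2) auto
    hence "q*(q-1)*(1+t) powr (q-2) \<le> q*(q-1)*(1+Y) powr (q-2)"
      using q by (intro mult_left_mono) auto
    thus ?thesis using d2[of t q a] that a unfolding g_def by (intro exI[of _ "q*(q-1)*(1+t) powr (q-2) - 2*a"]) auto
  qed
  show ?thesis
  proof (cases "y \<ge> 0")
    case True
    have "f y \<le> f 0"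
    proof (rule DERIV_nonpos_imp_nonincreasing[OF True])
      fix t assume t: "0 \<le> t" "t \<le> y"
      have "g t \<le> g 0"
        by (rule DERIV_nonpos_imp_nonincreasing[OF t(1)]) (use gd t y in auto)
      thus "\<exists>z. DERIV f t :> z \<and> z \<le> 0" using d1[of t q a] t g0 unfolding f_def g_def by auto
    qed
    thus ?thesis by (simp add: f_def)
  next
    case False
    have "f y \<le> f 0"
    proof (rule DERIV_nonneg_imp_nondecreasing[of y 0])
      show "y \<le> 0" using False by simp
    next
      fix t assume t: "y \<le> t" "t \<le> 0"
      have "g 0 \<le> g t"
        by (rule DERIV_nonpos_imp_nonincreasing[OF t(2)]) (use gd t y in auto)
      thus "\<exists>z. DERIV f t :> z \<and> z \<ge> 0" using d1[of t q a] t y g0 unfolding f_def g_def by auto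
    qed
    thus ?thesis by (simp add: f_def)
  qed
qed

lemma taylor_low:
  fixes q y :: real
  assumes q: "q \<ge> 2" and y: "0 \<le> y"
  shows "1 + q*y + q*(q-1)/2*y^2 \<le> (1+y) powr q"
proof -
  define a where "a = q*(q-1)/2"
  define f where "f = (\<lambda>t::real. (1+t) powr q - q*t - a*t^2)"
  define g where "g = (\<lambda>t::real. q*(1+t) powr (q-1) - q - 2*a*t)"
  have g0: "g 0 = 0" by (simp add: g_def)
  have "f 0 \<le> f y"
  proof (rule DERIV_nonneg_imp_nondecreasing[OF y])
    fix t assume t: "0 \<le> t" "t \<le> y"
    have "g 0 \<le> g t"
    proof (rule DERIV_nonneg_imp_nondecreasing[OF t(1)])
      fix s assume s: "0 \<le> s" "s \<le> t"
      have "1 \<le> (1+s) powr (q-2)" using s q by (simp add: ge_one_powr_ge_zero)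
      hence "q*(q-1)*1 \<le> q*(q-1)*(1+s) powr (q-2)"
        using q by (intro mult_left_mono) auto
      thus "\<exists>z. DERIV g s :> z \<and> z \<ge> 0" using d2[of s q a] s unfolding g_def a_def
        by (intro exI[of _ "q*(q-1)*(1+s) powr (q-2) - 2*(q*(q-1)/2)"]) auto
    qed
    thus "\<exists>z. DERIV f t :> z \<and> z \<ge> 0" using d1[of t q a] t g0 unfolding f_def g_def by auto
  qed
  thus ?thesis by (simp add: f_def a_def)
qed

lemma bern:
  fixes q y :: real
  assumes q: "q \<ge> 1" and y: "-1/2 \<le> y" "y \<le> 0"
  shows "1 + q*y \<le> (1+y) powr q"
proof -
  define f where "f = (\<lambda>t::real. (1+t) powr q - q*t - 0*t^2)"
  have "f 0 \<le> f y"
  proof (rule DERIV_nonpos_imp_nonincreasing[OF y(2)])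
    fix t assume t: "y \<le> t" "t \<le> 0"
    have "(1+t) powr (q-1) \<le> 1" using t y q by (intro powr_le1) auto
    thus "\<exists>z. DERIV f t :> z \<and> z \<le> 0" using d1[of t q 0] t y q unfolding f_def
      by (intro exI[of _ "q*(1+t) powr (q-1) - q - 2*0*t"]) (auto simp: mult_left_le)
  qed
  thus ?thesis by (simp add: f_def)
qed
lemma sym_low_pos:
  fixes q y :: real
  assumes q: "q \<ge> 2" and y: "0 \<le> y"
  shows "2 + q*(q-1)/2*y^2 \<le> \<bar>1+y\<bar> powr q + \<bar>1-y\<bar> powr q"
proof -
  have A: "1 + q*y + q*(q-1)/2*y^2 \<le> \<bar>1+y\<bar> powr q" using taylor_low[OF q y] y by simp
  have B: "1 - q*y \<le> \<bar>1-y\<bar> powr q"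
  proof (cases "y \<le> 1/2")
    case True
    have "1 + q*(-y) \<le> (1+(-y)) powr q" using q y True by (intro bern) auto
    thus ?thesis using True by simp
  next
    case False
    have "2*(1/2) \<le> q*y" using False q by (intro mult_mono) auto
    thus ?thesis using powr_ge_zero[of "\<bar>1-y\<bar>" q] by linarith
  qed
  show ?thesis using A B by simp
qed

lemma sym_low:
  fixes q y :: real
  assumes q: "q \<ge> 2"
  shows "2 + q*(q-1)/2*y^2 \<le> \<bar>1+y\<bar> powr q + \<bar>1-y\<bar> powr q"
proof (cases "y \<ge> 0")
  case True thus ?thesis using sym_low_pos[OF q] by blast
next
  case False
  have "2 + q*(q-1)/2*(-y)^2 \<le> \<bar>1+(-y)\<bar> powr q + \<bar>1-(-y)\<bar> powr q"
    using False by (intro sym_low_pos[OF q]) auto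
  thus ?thesis by simp
qed

lemma up_point:
  fixes q \<rho> y :: real
  assumes q: "q \<ge> 2" and r: "0 < \<rho>" "\<rho> \<le> 1/3"
  defines "k \<equiv> 1 + 2*(q-2)/ln(1/\<rho>)"
  shows "\<bar>1+y\<bar> powr q \<le> (1 + q*y + q*(q-1)/(4*\<rho>^2)*y^2) + k powr q * \<bar>y\<bar> powr q"
proof -
  define L where "L = ln (1/\<rho>)"
  define a where "a = q*(q-1)/(4*\<rho>^2)"
  have L3: "L \<ge> ln 3" unfolding L_def using r by (subst ln_le_cancel_iff) (auto simp: field_simps)
  have Lpos: "L > 0" using L3 ln_gt_zero[of 3] by linarith
  have k1: "k \<ge> 1" unfolding k_def L_def[symmetric] using q Lpos by auto
  have r2: "\<rho>^2 \<le> (1/3)^2" using r by (intro power_mono) auto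
  have aq: "a \<ge> q^2/4"
  proof -
    have "q^2 * \<rho>^2 \<le> q*(q-1)"
    proof -
      have "q^2 * \<rho>^2 \<le> q^2 * (1/3)^2" using r2 by (intro mult_left_mono) auto
      also have "\<dots> \<le> q*(q-1)"
      proof -
        have "0 \<le> q*(8*q - 9)" using q by (intro mult_nonneg_nonneg) auto
        thus ?thesis by (simp add: power2_eq_square algebra_simps)
      qed
      finally show ?thesis .
    qed
    thus ?thesis unfolding a_def using r by (simp add: field_simps)
  qed
  have Pnn: "0 \<le> 1 + q*y + a*y^2"
  proof -
    have "0 \<le> (1 + q*y/2)^2" by simp
    also have "\<dots> = 1 + q*y + q^2/4*y^2" by (simp add: power2_eq_square field_simps)
    also have "\<dots> \<le> 1 + q*y + a*y^2" using aq by (intro add_left_mono mult_right_mono) auto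
    finally show ?thesis .
  qed
  have kpos: "0 \<le> k powr q * \<bar>y\<bar> powr q" by simp
  show ?thesis
  proof (cases "\<bar>1+y\<bar> \<le> k*\<bar>y\<bar>")
    case True
    have "\<bar>1+y\<bar> powr q \<le> (k*\<bar>y\<bar>) powr q" using True q by (intro powr_mono2) auto
    also have "\<dots> = k powr q * \<bar>y\<bar> powr q" using k1 by (simp add: powr_mult)
    finally show ?thesis using Pnn unfolding a_def by linarith
  next
    case False
    have ky: "\<bar>y\<bar> \<le> k*\<bar>y\<bar>" using k1 by (simp add: mult_le_cancel_right1)
    have ym: "y > -1/2"
    proof (rule ccontr)
      assume "\<not> y > -1/2"
      hence "\<bar>1+y\<bar> \<le> \<bar>y\<bar>" by (auto simp: abs_if)
      thus False using False ky by linarith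
    qed
    have main: "(1+y) powr q \<le> 1 + q*y + a*y^2"
    proof (cases "q = 2")
      case True
      show ?thesis
      proof (rule taylor_up[where Y="max y 0"])
        have "1 + max y 0 > 0" using ym by auto
        hence "q*(q-1)*(1+max y 0) powr (q-2) = 2" using True by simp
        also have "2 \<le> 2*a" using aq True by simp
        finally show "q*(q-1)*(1+max y 0) powr (q-2) \<le> 2*a" .
      qed (use q ym in auto)
    next
      case False
      hence q2: "q > 2" using q by simp
      define \<delta> where "\<delta> = L/(2*(q-2))"
      have dpos: "\<delta> > 0" unfolding \<delta>_def using Lpos q2 by simp
      have yd: "y \<le> \<delta>"
      proof (rule ccontr)
        assume "\<not> y \<le> \<delta>"
        hence yd: "y > \<delta>" by simp
        have "2*(q-2)/L * y \<ge> 2*(q-2)/L * \<delta>" using yd q2 Lpos by (intro mult_left_mono) auto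
        also have "2*(q-2)/L * \<delta> = 1" unfolding \<delta>_def using q2 Lpos by simp
        finally have "\<bar>1+y\<bar> \<le> k*\<bar>y\<bar>" using yd dpos unfolding k_def L_def[symmetric]
          by (simp add: algebra_simps)
        thus False using \<open>\<not> \<bar>1+y\<bar> \<le> k*\<bar>y\<bar>\<close> by simp
      qed
      show ?thesis
      proof (rule taylor_up[OF q _ yd])
        show "-1/2 \<le> y" using ym by simp
        show "0 \<le> \<delta>" using dpos by simp
        have "(1+\<delta>) powr (q-2) = exp ((q-2) * ln (1+\<delta>))" using dpos by (simp add: powr_def)
        also have "\<dots> \<le> exp ((q-2) * \<delta>)"
        proof -
          have "(q-2) * ln (1+\<delta>) \<le> (q-2) * \<delta>" using q2 dpos ln_add_one_self_le_self[of \<delta>]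
            by (intro mult_left_mono) auto
          thus ?thesis by simp
        qed
        also have "(q-2) * \<delta> = L/2" unfolding \<delta>_def using q2 by (simp add: field_simps)
        finally have e1: "(1+\<delta>) powr (q-2) \<le> exp (L/2)" .
        define u where "u = exp (L/2)"
        have u2: "u^2 = 1/\<rho>" unfolding u_def L_def using r
          by (simp add: exp_double[symmetric] power2_eq_square exp_add[symmetric])
        have u1: "u \<ge> 1" unfolding u_def using Lpos by simp
        have "u^3 \<ge> u^2" using u1 by (simp add: power_increasing)
        moreover have "1/\<rho> \<ge> 3" using r by (simp add: field_simps)
        ultimately have u3: "u^3 \<ge> 3" using u2 by linarith
        have "u*3 \<le> u*u^3" using u3 u1 by (intro mult_left_mono) auto
        hence "2*u \<le> u^4" using u1 by (simp add: power_Suc[symmetric] del: power_Suc)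
        hence "u \<le> (u^2)^2/2" by (simp add: power_mult[symmetric])
        hence "u \<le> 1/(2*\<rho>^2)" using u2 by (simp add: power_divide field_simps power2_eq_square)
        hence "(1+\<delta>) powr (q-2) \<le> 1/(2*\<rho>^2)" using e1 unfolding u_def by simp
        hence "q*(q-1)*(1+\<delta>) powr (q-2) \<le> q*(q-1)*(1/(2*\<rho>^2))"
          using q by (intro mult_left_mono) auto
        also have "\<dots> = 2*a" unfolding a_def using r by (simp add: field_simps)
        finally show "q*(q-1)*(1+\<delta>) powr (q-2) \<le> 2*a" .
      qed
    qed
    have "\<bar>1+y\<bar> = 1+y" using ym by simp
    hence "\<bar>1+y\<bar> powr q \<le> 1 + q*y + a*y^2" using main by simp
    thus ?thesis using kpos unfolding a_def by linarith
  qed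
qed


lemma gauss_low:
  fixes Z :: "'a \<Rightarrow> real" and q d :: real
  assumes Zd: "distributed M lborel Z (\<lambda>x. ennreal (std_normal_density x))" and q: "q \<ge> 2"
  shows "ennreal (1 + q*(q-1)/4 * d^2) \<le> qmoment M q (\<lambda>x. 1 + d * Z x)"
proof -
  define h where "h t = ennreal (\<bar>1 + d*t\<bar> powr q)" for t
  define f where "f t = ennreal (std_normal_density t)" for t
  have hm[measurable]: "h \<in> borel_measurable borel" unfolding h_def by measurable
  have fm[measurable]: "f \<in> borel_measurable borel" unfolding f_def by measurable
  define I where "I = (\<integral>\<^sup>+t. f t * h t \<partial>lborel)"
  have I: "qmoment M q (\<lambda>x. 1 + d * Z x) = I"
    unfolding I_def qmoment_def f_def using distributed_nn_integral[OF Zd, of h] by (simp add: h_def)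
  have R: "I = (\<integral>\<^sup>+t. f t * h (-t) \<partial>lborel)"
    unfolding I_def by (subst nn_integral_real_affine[where c="-1" and t=0]) (auto simp: f_def normal_density_def)
  define c where "c = q*(q-1)/2"
  define g where "g t = std_normal_density t * (2 + c*d^2*t^2)" for t
  have gint: "integrable lborel g"
  proof -
    have "g = (\<lambda>t. 2 * std_normal_density t + (c*d^2) * (std_normal_density t * t^2))"
      unfolding g_def by (auto simp: algebra_simps)
    moreover have "integrable lborel (\<lambda>t. 2 * std_normal_density t + (c*d^2) * (std_normal_density t * t^2))"
      using integrable_std_normal_moment[of 2] by (intro Bochner_Integration.integrable_add Bochner_Integration.integrable_mult_right integrable_normal_density) auto
    ultimately show ?thesis by simp
  qed
  have gval: "(\<integral>t. g t \<partial>lborel) = 2 + c*d^2"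
  proof -
    have m2: "(\<integral>t. std_normal_density t * t^2 \<partial>lborel) = 1"
      using integral_std_normal_moment_even[of 1] by simp
    have "(\<integral>t. g t \<partial>lborel) = (\<integral>t. 2 * std_normal_density t + c*d^2 * (std_normal_density t * t^2) \<partial>lborel)"
      unfolding g_def by (simp add: algebra_simps)
    also have "\<dots> = 2 * (\<integral>t. std_normal_density t \<partial>lborel) + c*d^2 * (\<integral>t. std_normal_density t * t^2 \<partial>lborel)"
      using integrable_std_normal_moment[of 2] by (subst Bochner_Integration.integral_add) (auto intro!: Bochner_Integration.integrable_mult_right)
    also have "\<dots> = 2 + c*d^2" using m2 by simp
    finally show ?thesis .
  qed
  have gnn: "0 \<le> g t" for t unfolding g_def c_def using q by (intro mult_nonneg_nonneg) auto
  have "ennreal (2 + c*d^2) = (\<integral>\<^sup>+t. ennreal (g t) \<partial>lborel)"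
    using nn_integral_eq_integral[OF gint] gnn gval by simp
  also have "\<dots> \<le> (\<integral>\<^sup>+t. f t * h t + f t * h (-t) \<partial>lborel)"
  proof (rule nn_integral_mono)
    fix t
    have "2 + c*(d*t)^2 \<le> \<bar>1 + d*t\<bar> powr q + \<bar>1 - d*t\<bar> powr q"
      using sym_low[OF q, of "d*t"] unfolding c_def by simp
    hence "g t \<le> std_normal_density t * (\<bar>1 + d*t\<bar> powr q + \<bar>1 - d*t\<bar> powr q)"
      unfolding g_def by (intro mult_left_mono) (auto simp: power_mult_distrib algebra_simps)
    thus "ennreal (g t) \<le> f t * h t + f t * h (-t)"
      unfolding f_def h_def
      by (simp add: ennreal_mult[symmetric] ennreal_plus[symmetric] distrib_left del: ennreal_plus)
  qed
  also have "\<dots> = I + I"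
    by (subst nn_integral_add) (auto simp: I_def R[symmetric])
  finally have H: "ennreal (2 + c*d^2) \<le> I + I" .
  have cnn: "0 \<le> c/2*d^2" unfolding c_def using q by auto
  have "ennreal (2 + c*d^2) = ennreal 2 * ennreal (1 + c/2*d^2)"
    using cnn by (subst ennreal_mult[symmetric]) (auto simp: algebra_simps)
  hence "2 * ennreal (1 + c/2*d^2) \<le> 2 * I" using H by (simp add: mult_2)
  hence "ennreal (1 + c/2*d^2) \<le> I" by (subst (asm) ennreal_mult_le_mult_iff) auto
  thus ?thesis unfolding I c_def by (simp add: field_simps)
qed


lemma P_nonneg:
  fixes q \<rho> y :: real
  assumes q: "q \<ge> 2" and r: "0 < \<rho>" "\<rho> \<le> 1/3"
  shows "0 \<le> 1 + q*y + q*(q-1)/(4*\<rho>^2)*y^2"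
proof -
  define a where "a = q*(q-1)/(4*\<rho>^2)"
  have r2: "\<rho>^2 \<le> (1/3)^2" using r by (intro power_mono) auto
  have aq: "a \<ge> q^2/4"
  proof -
    have "q^2 * \<rho>^2 \<le> q*(q-1)"
    proof -
      have "q^2 * \<rho>^2 \<le> q^2 * (1/3)^2" using r2 by (intro mult_left_mono) auto
      also have "\<dots> \<le> q*(q-1)"
      proof -
        have "0 \<le> q*(8*q - 9)" using q by (intro mult_nonneg_nonneg) auto
        thus ?thesis by (simp add: power2_eq_square algebra_simps)
      qed
      finally show ?thesis .
    qed
    thus ?thesis unfolding a_def using r by (simp add: field_simps)
  qed
  have "0 \<le> (1 + q*y/2)^2" by simp
  also have "\<dots> = 1 + q*y + q^2/4*y^2" by (simp add: power2_eq_square field_simps)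
  also have "\<dots> \<le> 1 + q*y + a*y^2" using aq by (intro add_left_mono mult_right_mono) auto
  finally show ?thesis unfolding a_def .
qed

theorem mainTheorem13:
  fixes M :: "'a measure" and X Z :: "'a \<Rightarrow> real" and \<rho> q d :: real
  assumes "prob_space M"
    and "0 < \<rho>" "\<rho> \<le> 1/3" "q \<ge> 2"
    and "X \<in> borel_measurable M"
    and "integrable M X" "integrable M (\<lambda>x. (X x)\<^sup>2)"
    and "(\<integral>x. X x \<partial>M) = 0" "(\<integral>x. (X x)\<^sup>2 \<partial>M) = 1"
    and "distributed M lborel Z std_normal_density"
  shows "qmoment M q (\<lambda>x. 1 + \<rho> * d * X x)
         \<le> qmoment M q (\<lambda>x. 1 + d * Z x)
           + ennreal ((\<rho> * (1 + 2 * (q - 2) / ln (1 / \<rho>))) powr q)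
             * qmoment M q (\<lambda>x. d * X x)"
proof -
  note Xm[measurable] = assms(5)
  interpret prob_space M by (rule assms(1))
  have q: "q \<ge> 2" and r: "0 < \<rho>" "\<rho> \<le> 1/3" using assms(2-4) by auto
  define L where "L = ln (1/\<rho>)"
  define k where "k = 1 + 2 * (q - 2) / L"
  have Lpos: "L > 0" unfolding L_def using r by simp
  have k1: "k \<ge> 1" unfolding k_def using q Lpos by auto
  define bq where "bq = (\<rho> * k) powr q"
  have bq: "bq = \<rho> powr q * k powr q" unfolding bq_def using r k1 by (simp add: powr_mult)
  define a where "a = q*(q-1)/(4*\<rho>^2)"
  define P where "P x = 1 + q*(\<rho>*d*X x) + a*(\<rho>*d*X x)^2" for x
  have Pnn: "0 \<le> P x" for x unfolding P_def a_def using P_nonneg[OF q r] by blast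
  have pt: "ennreal (\<bar>1 + \<rho>*d*X x\<bar> powr q) \<le> ennreal (P x) + ennreal bq * ennreal (\<bar>d * X x\<bar> powr q)" for x
  proof -
    have "\<bar>1 + \<rho>*d*X x\<bar> powr q \<le> P x + k powr q * \<bar>\<rho>*d*X x\<bar> powr q"
      using up_point[OF q r, of "\<rho>*d*X x"] unfolding P_def a_def k_def L_def by simp
    also have "\<bar>\<rho>*d*X x\<bar> powr q = \<rho> powr q * \<bar>d*X x\<bar> powr q"
      using r by (simp add: abs_mult powr_mult mult.assoc)
    finally have "\<bar>1 + \<rho>*d*X x\<bar> powr q \<le> P x + bq * \<bar>d*X x\<bar> powr q"
      unfolding bq by (simp add: algebra_simps)
    moreover have "0 \<le> bq" unfolding bq_def by simp
    ultimately show ?thesis using Pnn[of x]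
      by (simp add: ennreal_mult[symmetric] ennreal_plus[symmetric] del: ennreal_plus)
  qed
  have "qmoment M q (\<lambda>x. 1 + \<rho> * d * X x) \<le> (\<integral>\<^sup>+x. ennreal (P x) + ennreal bq * ennreal (\<bar>d * X x\<bar> powr q) \<partial>M)"
    unfolding qmoment_def by (rule nn_integral_mono) (rule pt)
  also have "\<dots> = (\<integral>\<^sup>+x. ennreal (P x) \<partial>M) + ennreal bq * qmoment M q (\<lambda>x. d * X x)"
    unfolding qmoment_def P_def
    by (subst nn_integral_add) (auto simp: nn_integral_cmult)
  also have "(\<integral>\<^sup>+x. ennreal (P x) \<partial>M) = ennreal (1 + q*(q-1)/4 * d^2)"
  proof -
    have Peq: "P = (\<lambda>x. 1 + (q*\<rho>*d) * X x + (a*\<rho>^2*d^2) * (X x)^2)"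
      unfolding P_def by (auto simp: power_mult_distrib algebra_simps)
    have Pint: "integrable M P" unfolding Peq using assms(6,7)
      by (intro Bochner_Integration.integrable_add Bochner_Integration.integrable_mult_right) auto
    have "(\<integral>x. P x \<partial>M) = 1 + (q*\<rho>*d) * (\<integral>x. X x \<partial>M) + (a*\<rho>^2*d^2) * (\<integral>x. (X x)^2 \<partial>M)"
      unfolding Peq using assms(6,7)
      by (subst Bochner_Integration.integral_add; (subst Bochner_Integration.integral_add)?)
         (auto simp: prob_space intro!: Bochner_Integration.integrable_add Bochner_Integration.integrable_mult_right)
    also have "\<dots> = 1 + q*(q-1)/4 * d^2" using assms(8,9) r unfolding a_def by (simp add: field_simps)
    finally show ?thesis using nn_integral_eq_integral[OF Pint] Pnn by simp
  qed
  also have "ennreal (1 + q*(q-1)/4 * d^2) \<le> qmoment M q (\<lambda>x. 1 + d * Z x)"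
    by (rule gauss_low[OF assms(10) q])
  finally show ?thesis unfolding bq_def k_def L_def by (simp add: add_right_mono)
qed

end
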